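(* Let $d_i>0$ for all $i$, $\mathbf{P}\in\mathbb{Z}_{\ge0}^N$ with $P_N>0$, $\mathbf{L}\in\mathbb{R}^{N\times M}$ with non-negative entries and $L_{N,j}>0$ for all $j$, and $\gamma>0$. Let $\tilde{\boldsymbol\alpha}$ be the unique maximizer on the non-negative orthant of $S(\boldsymbol\alpha)=l(\boldsymbol\alpha)-\gamma\|\boldsymbol\alpha\|_2^2$. Then $\tilde{\boldsymbol\alpha}$ is a fixed point of the map $$\mathbf{T}_\gamma(\boldsymbol\alpha)_j=\frac{\big(\mathbf{L}^T(\mathbf{d}\odot e^{-\mathbf{L}\boldsymbol\alpha})\big)_j}{(\mathbf{L}^T\mathbf{P})_j+2\gamma\alpha_j}\,\alpha_j,\qquad j=1,\dots,M.$$ Moreover, if $\boldsymbol\alpha^{(0)}$ is strictly positive then all iterates $\boldsymbol\alpha^{(n+1)}=\mathbf{T}_\gamma(\boldsymbol\alpha^{(n)})$ are strictly positive, a strictly positive fixed point of $\mathbf{T}_\gamma$ is the maximizer of $S$, and if the iterates converge then their limit is the maximizer of $S$ on the non-negative orthant.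
   Context: $l(\boldsymbol\alpha)=\sum_{i=1}^N\big(P_i\log d_i-(\mathbf{L}\boldsymbol\alpha)_iP_i-d_i e^{-(\mathbf{L}\boldsymbol\alpha)_i}-\log(P_i!)\big)$ for $\boldsymbol\alpha\ge0$ (Poisson log-likelihood of the discretized Raman lidar model). $\odot$ denotes the componentwise product and $e^{-\mathbf{L}\boldsymbol\alpha}$ is taken componentwise. *)

theory Defs
  imports "HOL-Analysis.Analysis"
begin

text \<open>Vectors in R^N / R^M are represented as functions nat => real, with indices
  0..N-1 (resp. 0..M-1); the paper's index i = 1..N corresponds to i-1 here,
  so the paper's last index N is N - 1. The matrix L is nat => nat => real,
  L i j for i < N, j < M.\<close>

definition Lmul :: "nat \<Rightarrow> (nat \<Rightarrow> nat \<Rightarrow> real) \<Rightarrow> (nat \<Rightarrow> real) \<Rightarrow> nat \<Rightarrow> real" where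
  "Lmul M L \<alpha> i = (\<Sum>j<M. L i j * \<alpha> j)"

definition loglik :: "nat \<Rightarrow> nat \<Rightarrow> (nat \<Rightarrow> real) \<Rightarrow> (nat \<Rightarrow> nat) \<Rightarrow>
    (nat \<Rightarrow> nat \<Rightarrow> real) \<Rightarrow> (nat \<Rightarrow> real) \<Rightarrow> real" where
  "loglik N M d P L \<alpha> =
     (\<Sum>i<N. real (P i) * ln (d i) - Lmul M L \<alpha> i * real (P i)
            - d i * exp (- Lmul M L \<alpha> i) - ln (fact (P i)))"

definition Sobj :: "nat \<Rightarrow> nat \<Rightarrow> (nat \<Rightarrow> real) \<Rightarrow> (nat \<Rightarrow> nat) \<Rightarrow>
    (nat \<Rightarrow> nat \<Rightarrow> real) \<Rightarrow> real \<Rightarrow> (nat \<Rightarrow> real) \<Rightarrow> real" where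
  "Sobj N M d P L \<gamma> \<alpha> = loglik N M d P L \<alpha> - \<gamma> * (\<Sum>j<M. (\<alpha> j)\<^sup>2)"

definition orthant :: "nat \<Rightarrow> (nat \<Rightarrow> real) set" where
  "orthant M = {\<alpha>. (\<forall>j<M. 0 \<le> \<alpha> j) \<and> (\<forall>j. M \<le> j \<longrightarrow> \<alpha> j = 0)}"

definition Tmap :: "nat \<Rightarrow> nat \<Rightarrow> (nat \<Rightarrow> real) \<Rightarrow> (nat \<Rightarrow> nat) \<Rightarrow>
    (nat \<Rightarrow> nat \<Rightarrow> real) \<Rightarrow> real \<Rightarrow> (nat \<Rightarrow> real) \<Rightarrow> nat \<Rightarrow> real" where
  "Tmap N M d P L \<gamma> \<alpha> j =
     (if j < M then
        (\<Sum>i<N. L i j * (d i * exp (- Lmul M L \<alpha> i)))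
          / ((\<Sum>i<N. L i j * real (P i)) + 2 * \<gamma> * \<alpha> j) * \<alpha> j
      else 0)"

end

theory Submission
  imports Defs
begin

definition Acoef :: "nat \<Rightarrow> nat \<Rightarrow> (nat \<Rightarrow> real) \<Rightarrow> (nat \<Rightarrow> nat \<Rightarrow> real) \<Rightarrow> (nat \<Rightarrow> real) \<Rightarrow> nat \<Rightarrow> real" where
  "Acoef N M d L a j = (\<Sum>i<N. L i j * (d i * exp (- Lmul M L a i)))"
definition Bcoef :: "nat \<Rightarrow> (nat \<Rightarrow> nat) \<Rightarrow> (nat \<Rightarrow> nat \<Rightarrow> real) \<Rightarrow> nat \<Rightarrow> real" where
  "Bcoef N P L j = (\<Sum>i<N. L i j * real (P i))"
definition gco where
  "gco N M d P L \<gamma> a j = Acoef N M d L a j - Bcoef N P L j - 2*\<gamma>*a j"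

lemma Tmap_eq: "Tmap N M d P L \<gamma> a j = (if j < M then Acoef N M d L a j / (Bcoef N P L j + 2*\<gamma>*a j) * a j else 0)"
  unfolding Tmap_def Acoef_def Bcoef_def by simp

lemma loglik_bound:
  assumes d: "\<And>i. i < N \<Longrightarrow> 0 \<le> d i"
  shows "loglik N M d P L x \<le> loglik N M d P L a + (\<Sum>j<M. (Acoef N M d L a j - Bcoef N P L j) * (x j - a j))"
proof -
  have tm: "real (P i) * ln (d i) - Lmul M L x i * real (P i) - d i * exp (- Lmul M L x i) - ln (fact (P i))
     \<le> real (P i) * ln (d i) - Lmul M L a i * real (P i) - d i * exp (- Lmul M L a i) - ln (fact (P i))
       + (d i * exp (- Lmul M L a i) - real (P i)) * (Lmul M L x i - Lmul M L a i)" if i: "i < N" for i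
  proof -
    define s where "s = Lmul M L x i"
    define t where "t = Lmul M L a i"
    have "exp (- s) = exp (- t) * exp (- (s - t))" by (simp add: exp_add[symmetric])
    also have "\<dots> \<ge> exp (- t) * (1 + - (s - t))"
      by (intro mult_left_mono exp_ge_add_one_self) auto
    finally have "exp (-s) \<ge> exp (- t) * (1 - (s - t))" by (simp add: algebra_simps)
    hence "d i * exp (-s) \<ge> d i * (exp (- t) * (1 - (s - t)))"
      using d[OF i] by (rule mult_left_mono)
    thus ?thesis unfolding s_def[symmetric] t_def[symmetric] by (simp add: algebra_simps)
  qed
  have diff: "Lmul M L x i - Lmul M L a i = (\<Sum>j<M. L i j * (x j - a j))" for i
    unfolding Lmul_def by (simp add: sum_subtractf[symmetric] algebra_simps)
  have "loglik N M d P L x \<le> (\<Sum>i<N. real (P i) * ln (d i) - Lmul M L a i * real (P i) - d i * exp (- Lmul M L a i) - ln (fact (P i))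
       + (d i * exp (- Lmul M L a i) - real (P i)) * (Lmul M L x i - Lmul M L a i))"
    unfolding loglik_def by (rule sum_mono) (use tm in auto)
  also have "\<dots> = loglik N M d P L a + (\<Sum>i<N. (d i * exp (- Lmul M L a i) - real (P i)) * (Lmul M L x i - Lmul M L a i))"
    unfolding loglik_def by (simp add: sum.distrib)
  also have "(\<Sum>i<N. (d i * exp (- Lmul M L a i) - real (P i)) * (Lmul M L x i - Lmul M L a i))
      = (\<Sum>i<N. \<Sum>j<M. (d i * exp (- Lmul M L a i) - real (P i)) * (L i j * (x j - a j)))"
    by (simp add: diff sum_distrib_left)
  also have "\<dots> = (\<Sum>j<M. \<Sum>i<N. (d i * exp (- Lmul M L a i) - real (P i)) * (L i j * (x j - a j)))"
    by (rule sum.swap)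
  also have "\<dots> = (\<Sum>j<M. (x j - a j) * (\<Sum>i<N. L i j * (d i * exp (- Lmul M L a i) - real (P i))))"
    by (simp add: sum_distrib_left mult_ac)
  also have "\<dots> = (\<Sum>j<M. (Acoef N M d L a j - Bcoef N P L j) * (x j - a j))"
    unfolding Acoef_def Bcoef_def
    by (simp add: right_diff_distrib sum_subtractf mult_ac)
  finally show ?thesis by simp
qed

lemma Sobj_bound:
  assumes d: "\<And>i. i < N \<Longrightarrow> 0 \<le> d i"
  shows "Sobj N M d P L \<gamma> x \<le> Sobj N M d P L \<gamma> a + (\<Sum>j<M. gco N M d P L \<gamma> a j * (x j - a j))
          - \<gamma> * (\<Sum>j<M. (x j - a j)^2)"
proof -
  have q: "(\<Sum>j<M. (x j)^2) = (\<Sum>j<M. (a j)^2) + (\<Sum>j<M. 2 * a j * (x j - a j)) + (\<Sum>j<M. (x j - a j)^2)"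
    by (simp add: sum.distrib[symmetric] power2_eq_square algebra_simps)
  have g: "(\<Sum>j<M. gco N M d P L \<gamma> a j * (x j - a j)) = (\<Sum>j<M. (Acoef N M d L a j - Bcoef N P L j) * (x j - a j))
     - \<gamma> * (\<Sum>j<M. 2 * a j * (x j - a j))"
    unfolding gco_def by (simp add: sum_subtractf[symmetric] sum_distrib_left algebra_simps)
  show ?thesis using loglik_bound[of N d M P L x a, OF d]
    unfolding Sobj_def q g by (simp add: algebra_simps)
qed

lemma kkt_unique:
  assumes d: "\<And>i. i < N \<Longrightarrow> 0 \<le> d i" and gam: "0 < \<gamma>"
    and b: "b \<in> orthant M" and x: "x \<in> orthant M"
    and kkt: "\<And>j. j < M \<Longrightarrow> gco N M d P L \<gamma> b j \<le> 0 \<and> (b j \<noteq> 0 \<longrightarrow> gco N M d P L \<gamma> b j = 0)"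
    and le: "Sobj N M d P L \<gamma> b \<le> Sobj N M d P L \<gamma> x"
  shows "x = b"
proof -
  have "(\<Sum>j<M. gco N M d P L \<gamma> b j * (x j - b j)) \<le> 0"
  proof (rule sum_nonpos)
    fix j assume "j \<in> {..<M}"
    hence j: "j < M" by simp
    show "gco N M d P L \<gamma> b j * (x j - b j) \<le> 0"
    proof (cases "b j = 0")
      case True
      have "0 \<le> x j" using x j unfolding orthant_def by auto
      thus ?thesis using True kkt[OF j] by (simp add: mult_nonpos_nonneg)
    qed (use kkt[OF j] in auto)
  qed
  with Sobj_bound[of N d M P L \<gamma> x b, OF d] le
  have "\<gamma> * (\<Sum>j<M. (x j - b j)^2) \<le> 0" by linarith
  hence "(\<Sum>j<M. (x j - b j)^2) \<le> 0" using gam by (simp add: mult_le_0_iff)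
  moreover have "(\<Sum>j<M. (x j - b j)^2) \<ge> 0" by (simp add: sum_nonneg)
  ultimately have "(\<Sum>j<M. (x j - b j)^2) = 0" by linarith
  hence "\<forall>j\<in>{..<M}. (x j - b j)^2 = 0" by (subst (asm) sum_nonneg_eq_0_iff) auto
  hence "\<And>j. j < M \<Longrightarrow> x j = b j" by auto
  moreover have "\<And>j. M \<le> j \<Longrightarrow> x j = b j" using x b unfolding orthant_def by auto
  ultimately show ?thesis by (metis ext not_le)
qed


lemma kkt_interior:
  assumes j: "j < M" and pos: "0 < a j"
    and max: "\<And>b. b \<in> orthant M \<Longrightarrow> Sobj N M d P L \<gamma> b \<le> Sobj N M d P L \<gamma> a"
    and ain: "a \<in> orthant M"
  shows "gco N M d P L \<gamma> a j = 0"
proof -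
  have Lm: "Lmul M L (a(j := a j + e)) i = Lmul M L a i + L i j * e" for i e
  proof -
    have "(\<Sum>k<M. L i k * (a(j := a j + e)) k) = (\<Sum>k<M. L i k * a k + (if k = j then L i j * e else 0))"
      by (rule sum.cong) (auto simp: algebra_simps)
    thus ?thesis unfolding Lmul_def using j by (simp add: sum.distrib)
  qed
  have Q: "(\<Sum>k<M. ((a(j := a j + e)) k)^2) = (\<Sum>k<M. (a k)^2) + (2 * a j * e + e^2)" for e
  proof -
    have "(\<Sum>k<M. ((a(j := a j + e)) k)^2) = (\<Sum>k<M. (a k)^2 + (if k = j then 2 * a j * e + e^2 else 0))"
      by (rule sum.cong) (auto simp: power2_eq_square algebra_simps)
    thus ?thesis using j by (simp add: sum.distrib)
  qed
  define \<psi> where "\<psi> e = (\<Sum>i<N. real (P i) * ln (d i) - (Lmul M L a i + L i j * e) * real (P i)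
            - d i * exp (- (Lmul M L a i + L i j * e)) - ln (fact (P i)))
          - \<gamma> * ((\<Sum>k<M. (a k)^2) + (2 * a j * e + e^2))" for e
  have phi: "Sobj N M d P L \<gamma> (a(j := a j + e)) = \<psi> e" for e
    unfolding Sobj_def loglik_def \<psi>_def Lm Q by simp
  have D: "(\<psi> has_real_derivative
      (\<Sum>i<N. - (L i j * real (P i)) + d i * (exp (- Lmul M L a i) * L i j)) - \<gamma> * (2 * a j)) (at 0)"
    unfolding \<psi>_def
    by (auto intro!: derivative_eq_intros sum.cong)
  have D2: "(\<Sum>i<N. - (L i j * real (P i)) + d i * (exp (- Lmul M L a i) * L i j)) - \<gamma> * (2 * a j)
     = gco N M d P L \<gamma> a j"
    unfolding gco_def Acoef_def Bcoef_def by (simp add: sum.distrib sum_negf sum_subtractf algebra_simps)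
  have "\<forall>y. \<bar>0 - y\<bar> < a j \<longrightarrow> \<psi> y \<le> \<psi> 0"
  proof (intro allI impI)
    fix y assume "\<bar>0 - y\<bar> < a j"
    hence "a(j := a j + y) \<in> orthant M" using ain j unfolding orthant_def by auto
    from max[OF this] show "\<psi> y \<le> \<psi> 0" using phi[of y] phi[of 0] by simp
  qed
  from DERIV_local_max[OF D pos this] D2 show ?thesis by simp
qed

theorem mainTheorem4:
  fixes N M :: nat and d :: "nat \<Rightarrow> real" and P :: "nat \<Rightarrow> nat"
    and L :: "nat \<Rightarrow> nat \<Rightarrow> real" and \<gamma> :: real and \<alpha>t :: "nat \<Rightarrow> real"
  assumes N_pos: "0 < N"
    and d_pos: "\<And>i. i < N \<Longrightarrow> 0 < d i"
    and P_last: "0 < P (N - 1)"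
    and L_nonneg: "\<And>i j. i < N \<Longrightarrow> j < M \<Longrightarrow> 0 \<le> L i j"
    and L_last: "\<And>j. j < M \<Longrightarrow> 0 < L (N - 1) j"
    and gamma_pos: "0 < \<gamma>"
    and max_in: "\<alpha>t \<in> orthant M"
    and max_is: "\<And>\<beta>. \<beta> \<in> orthant M \<Longrightarrow> Sobj N M d P L \<gamma> \<beta> \<le> Sobj N M d P L \<gamma> \<alpha>t"
  shows "Tmap N M d P L \<gamma> \<alpha>t = \<alpha>t
    \<and> (\<forall>\<alpha> :: nat \<Rightarrow> nat \<Rightarrow> real.
          (\<forall>j<M. 0 < \<alpha> 0 j) \<and> (\<forall>n. \<alpha> (Suc n) = Tmap N M d P L \<gamma> (\<alpha> n))
          \<longrightarrow> (\<forall>n. \<forall>j<M. 0 < \<alpha> n j))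
    \<and> (\<forall>\<beta>. \<beta> \<in> orthant M \<and> (\<forall>j<M. 0 < \<beta> j) \<and> Tmap N M d P L \<gamma> \<beta> = \<beta>
          \<longrightarrow> \<beta> = \<alpha>t)
    \<and> (\<forall>(\<alpha> :: nat \<Rightarrow> nat \<Rightarrow> real) \<beta>.
          (\<forall>j<M. 0 < \<alpha> 0 j) \<and> (\<forall>n. \<alpha> (Suc n) = Tmap N M d P L \<gamma> (\<alpha> n))
          \<and> (\<forall>j. (\<lambda>n. \<alpha> n j) \<longlonglongrightarrow> \<beta> j)
          \<longrightarrow> \<beta> = \<alpha>t)"
proof -
  have dnn: "\<And>i. i < N \<Longrightarrow> 0 \<le> d i" using d_pos by (simp add: less_imp_le)
  have Nl: "N - 1 < N" using N_pos by simp
  have Bpos: "0 < Bcoef N P L j" if j: "j < M" for j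
    unfolding Bcoef_def
    by (rule sum_pos2[where i="N - 1"]) (use Nl L_last[OF j] P_last L_nonneg[OF _ j] in auto)
  have Apos: "0 < Acoef N M d L a j" if j: "j < M" for j a
    unfolding Acoef_def
    by (rule sum_pos2[where i="N - 1"]) (use Nl L_last[OF j] d_pos L_nonneg[OF _ j] dnn in auto)
  have den: "0 < Bcoef N P L j + 2 * \<gamma> * x" if "j < M" "0 \<le> x" for j x
    using Bpos[OF that(1)] gamma_pos that(2) by (simp add: add_pos_nonneg)
  have fix_g: "gco N M d P L \<gamma> a j = 0" if j: "j < M" and p: "0 < a j" and f: "Tmap N M d P L \<gamma> a j = a j" for a j
  proof -
    have dd: "0 < Bcoef N P L j + 2 * \<gamma> * a j" using den[OF j] p by simp
    from f j have "Acoef N M d L a j / (Bcoef N P L j + 2*\<gamma>*a j) * a j = 1 * a j" by (simp add: Tmap_eq)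
    hence "Acoef N M d L a j / (Bcoef N P L j + 2*\<gamma>*a j) = 1" using p by (subst (asm) mult_right_cancel) auto
    hence "Acoef N M d L a j = Bcoef N P L j + 2*\<gamma>*a j" using dd by (simp add: divide_eq_1_iff)
    thus ?thesis unfolding gco_def by simp
  qed
  have g_fix: "Tmap N M d P L \<gamma> a j = a j" if j: "j < M" and p: "0 \<le> a j" and g: "gco N M d P L \<gamma> a j = 0" for a j
  proof -
    have dd: "0 < Bcoef N P L j + 2 * \<gamma> * a j" using den[OF j p] .
    have "Acoef N M d L a j = Bcoef N P L j + 2*\<gamma>*a j" using g unfolding gco_def by simp
    thus ?thesis using j dd by (simp add: Tmap_eq)
  qed
  have part1: "Tmap N M d P L \<gamma> \<alpha>t = \<alpha>t"
  proof
    fix j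
    show "Tmap N M d P L \<gamma> \<alpha>t j = \<alpha>t j"
    proof (cases "j < M")
      case True
      hence nn: "0 \<le> \<alpha>t j" using max_in unfolding orthant_def by auto
      show ?thesis
      proof (cases "\<alpha>t j = 0")
        case True thus ?thesis by (simp add: Tmap_eq)
      next
        case False
        hence "0 < \<alpha>t j" using nn by simp
        from kkt_interior[OF \<open>j < M\<close> this max_is max_in] show ?thesis
          using g_fix[of j \<alpha>t, OF \<open>j < M\<close> nn] by simp
      qed
    next
      case False thus ?thesis using max_in unfolding orthant_def by (simp add: Tmap_eq)
    qed
  qed
  have part2: "\<forall>n. \<forall>j<M. 0 < \<alpha> n j"
    if a0: "\<forall>j<M. 0 < \<alpha> 0 j" and rec: "\<forall>n. \<alpha> (Suc n) = Tmap N M d P L \<gamma> (\<alpha> n)" for \<alpha> :: "nat \<Rightarrow> nat \<Rightarrow> real"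
  proof
    fix n show "\<forall>j<M. 0 < \<alpha> n j"
    proof (induction n)
      case 0 thus ?case using a0 by simp
    next
      case (Suc n)
      show ?case
      proof (intro allI impI)
        fix j assume j: "j < M"
        have p: "0 < \<alpha> n j" using Suc j by simp
        have "0 < Acoef N M d L (\<alpha> n) j / (Bcoef N P L j + 2*\<gamma>*\<alpha> n j) * \<alpha> n j"
          using Apos[OF j] den[OF j less_imp_le[OF p]] p by simp
        thus "0 < \<alpha> (Suc n) j" using rec j by (simp add: Tmap_eq)
      qed
    qed
  qed
  have part3: "\<beta> = \<alpha>t" if b: "\<beta> \<in> orthant M" and bp: "\<forall>j<M. 0 < \<beta> j" and bf: "Tmap N M d P L \<gamma> \<beta> = \<beta>" for \<beta>
  proof -
    have "gco N M d P L \<gamma> \<beta> j = 0" if "j < M" for j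
      using fix_g[of j \<beta>, OF that] bp bf that by simp
    hence "\<alpha>t = \<beta>"
      by (intro kkt_unique[OF dnn gamma_pos b max_in _ max_is[OF b]]) auto
    thus ?thesis by simp
  qed
  have part4: "\<beta> = \<alpha>t"
    if a0: "\<forall>j<M. 0 < \<alpha> 0 j" and rec: "\<forall>n. \<alpha> (Suc n) = Tmap N M d P L \<gamma> (\<alpha> n)"
      and conv: "\<forall>j. (\<lambda>n. \<alpha> n j) \<longlonglongrightarrow> \<beta> j" for \<alpha> :: "nat \<Rightarrow> nat \<Rightarrow> real" and \<beta>
  proof -
    have pos: "\<And>n j. j < M \<Longrightarrow> 0 < \<alpha> n j" using part2[OF a0 rec] by simp
    have bnn: "0 \<le> \<beta> j" if "j < M" for j
      by (rule LIMSEQ_le_const[OF conv[rule_format, of j]]) (use pos[OF that] less_imp_le in blast)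
    have bzero: "\<beta> j = 0" if "M \<le> j" for j
    proof -
      have "(\<lambda>n. \<alpha> (Suc n) j) \<longlonglongrightarrow> \<beta> j" using conv LIMSEQ_Suc by blast
      moreover have "(\<lambda>n. \<alpha> (Suc n) j) = (\<lambda>n. 0)" using rec that by (auto simp: Tmap_eq)
      ultimately show ?thesis using LIMSEQ_unique tendsto_const by metis
    qed
    have borth: "\<beta> \<in> orthant M" unfolding orthant_def using bnn bzero by auto
    have kkt: "gco N M d P L \<gamma> \<beta> j \<le> 0 \<and> (\<beta> j \<noteq> 0 \<longrightarrow> gco N M d P L \<gamma> \<beta> j = 0)" if j: "j < M" for j
    proof -
      have Aconv: "(\<lambda>n. Acoef N M d L (\<alpha> n) j) \<longlonglongrightarrow> Acoef N M d L \<beta> j"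
        unfolding Acoef_def Lmul_def using conv by (auto intro!: tendsto_intros)
      define r where "r n = Acoef N M d L (\<alpha> n) j / (Bcoef N P L j + 2*\<gamma>*\<alpha> n j)" for n
      define R where "R = Acoef N M d L \<beta> j / (Bcoef N P L j + 2*\<gamma>*\<beta> j)"
      have dR: "0 < Bcoef N P L j + 2*\<gamma>*\<beta> j" using den[OF j bnn[OF j]] .
      have rconv: "r \<longlonglongrightarrow> R" unfolding r_def R_def
        using dR conv by (auto intro!: tendsto_intros Aconv)
      have rec': "\<alpha> (Suc n) j = r n * \<alpha> n j" for n using rec j by (simp add: Tmap_eq r_def)
      show ?thesis
      proof (cases "\<beta> j = 0")
        case False
        have "(\<lambda>n. \<alpha> (Suc n) j) \<longlonglongrightarrow> \<beta> j" using conv LIMSEQ_Suc by blast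
        moreover have "(\<lambda>n. \<alpha> (Suc n) j) \<longlonglongrightarrow> R * \<beta> j" unfolding rec'
          using rconv conv by (auto intro!: tendsto_mult)
        ultimately have "\<beta> j = R * \<beta> j" using LIMSEQ_unique by blast
        hence "R = 1" using False by simp
        hence "Acoef N M d L \<beta> j = Bcoef N P L j + 2*\<gamma>*\<beta> j" using dR unfolding R_def by (simp add: divide_eq_1_iff)
        thus ?thesis unfolding gco_def by simp
      next
        case True
        have "\<not> Acoef N M d L \<beta> j > Bcoef N P L j"
        proof
          assume gt: "Acoef N M d L \<beta> j > Bcoef N P L j"
          have "R > 1" unfolding R_def using gt True Bpos[OF j] by simp
          from order_tendstoD(1)[OF rconv this] obtain n0 where n0: "\<And>n. n \<ge> n0 \<Longrightarrow> 1 < r n"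
            unfolding eventually_sequentially by blast
          have mono: "\<alpha> n0 j \<le> \<alpha> n j" if "n0 \<le> n" for n
            using that
          proof (induction n rule: dec_induct)
            case base thus ?case by simp
          next
            case (step m)
            have "\<alpha> m j \<le> r m * \<alpha> m j" using n0[OF step.hyps(1)] pos[OF j, of m]
              by (simp add: less_imp_le)
            thus ?case using step.IH rec'[of m] by simp
          qed
          have "\<alpha> n0 j \<le> \<beta> j"
            by (rule LIMSEQ_le_const[OF conv[rule_format, of j]]) (use mono in blast)
          thus False using True pos[OF j, of n0] by simp
        qed
        thus ?thesis using True unfolding gco_def by simp
      qed
    qed
    have "\<alpha>t = \<beta>" by (rule kkt_unique[OF dnn gamma_pos borth max_in kkt max_is[OF borth]])
    thus ?thesis by simp
  qed
  show ?thesis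
  proof (intro conjI allI impI)
    show "Tmap N M d P L \<gamma> \<alpha>t = \<alpha>t" by (rule part1)
  next
    fix \<alpha> :: "nat \<Rightarrow> nat \<Rightarrow> real" and n j
    assume h: "(\<forall>j<M. 0 < \<alpha> 0 j) \<and> (\<forall>n. \<alpha> (Suc n) = Tmap N M d P L \<gamma> (\<alpha> n))" and j: "j < M"
    from h have h1: "\<forall>j<M. 0 < \<alpha> 0 j" and h2: "\<forall>n. \<alpha> (Suc n) = Tmap N M d P L \<gamma> (\<alpha> n)" by auto
    from part2[OF h1 h2] j show "0 < \<alpha> n j" by simp
  next
    fix \<beta> assume h: "\<beta> \<in> orthant M \<and> (\<forall>j<M. 0 < \<beta> j) \<and> Tmap N M d P L \<gamma> \<beta> = \<beta>"
    from h have h1: "\<beta> \<in> orthant M" and h2: "\<forall>j<M. 0 < \<beta> j" and h3: "Tmap N M d P L \<gamma> \<beta> = \<beta>" by auto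
    show "\<beta> = \<alpha>t" by (rule part3[OF h1 h2 h3])
  next
    fix \<alpha> :: "nat \<Rightarrow> nat \<Rightarrow> real" and \<beta>
    assume h: "(\<forall>j<M. 0 < \<alpha> 0 j) \<and> (\<forall>n. \<alpha> (Suc n) = Tmap N M d P L \<gamma> (\<alpha> n))
          \<and> (\<forall>j. (\<lambda>n. \<alpha> n j) \<longlonglongrightarrow> \<beta> j)"
    from h have h1: "\<forall>j<M. 0 < \<alpha> 0 j" and h2: "\<forall>n. \<alpha> (Suc n) = Tmap N M d P L \<gamma> (\<alpha> n)"
      and h3: "\<forall>j. (\<lambda>n. \<alpha> n j) \<longlonglongrightarrow> \<beta> j" by auto
    show "\<beta> = \<alpha>t" by (rule part4[OF h1 h2 h3])
  qed
qed

end
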